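(* Let $q$ be a prime power, and let $\pi,\sigma\in P$ with $\pi(x)=a+\frac{r}{x-i}$ and $\sigma(x)=b+\frac{s}{x-j}$ (i.e. $\pi=f_{a,r,i}$, $\sigma=f_{b,s,j}$ with $r,s\neq 0$). Then $hd(\pi^{\triangle},\sigma^{\triangle})=hd(\pi,\sigma)-3$ if and only if $r=s$ and $(b-a)(j-i)=r$.
   Context: For $K,i\in GF(q)$ and $r\in GF(q)\setminus\{0\}$, $f_{K,r,i}:GF(q)\cup\{\infty\}\to GF(q)\cup\{\infty\}$ is the permutation given by $f_{K,r,i}(x)=K+\frac{r}{x-i}$ for $x\notin\{i,\infty\}$, $f_{K,r,i}(\infty)=K$, $f_{K,r,i}(i)=\infty$; $P$ is the set of all such $f_{K,r,i}$. For permutations $\pi,\sigma$ of a finite set, $hd(\pi,\sigma)$ is the number of points at which they differ. The distinguished element is $F=\infty$: for a permutation $\pi$ of $GF(q)\cup\{\infty\}$, $\pi^{\triangle}$ is the permutation with $\pi^{\triangle}(\pi^{-1}(\infty))=\pi(\infty)$, $\pi^{\triangle}(\infty)=\infty$, and $\pi^{\triangle}(x)=\pi(x)$ otherwise. *)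

theory Defs
  imports Main
begin

text \<open>GF(q) is modelled by an arbitrary finite field type 'a (its cardinality is
a prime power); GF(q) cup {infinity} is 'a option with None = infinity.\<close>

definition fKri :: "'a::{field,finite} \<Rightarrow> 'a \<Rightarrow> 'a \<Rightarrow> 'a option \<Rightarrow> 'a option" where
  "fKri K r i x = (case x of
       None \<Rightarrow> Some K
     | Some y \<Rightarrow> (if y = i then None else Some (K + r / (y - i))))"

definition Pset :: "('a::{field,finite} option \<Rightarrow> 'a option) set" where
  "Pset = {fKri K r i | K r i. r \<noteq> 0}"

definition hdist :: "('b::finite \<Rightarrow> 'c) \<Rightarrow> ('b \<Rightarrow> 'c) \<Rightarrow> nat" where
  "hdist \<pi> \<sigma> = card {x. \<pi> x \<noteq> \<sigma> x}"

definition tri :: "('a option \<Rightarrow> 'a option) \<Rightarrow> 'a option \<Rightarrow> 'a option" where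
  "tri \<pi> x = (if x = None then None else if \<pi> x = None then \<pi> None else \<pi> x)"

end

theory Submission
  imports Defs
begin

lemma card3:
  assumes "u \<noteq> v" "u \<noteq> w" "v \<noteq> w"
  shows "card (S \<inter> {u,v,w}) = of_bool (u\<in>S) + of_bool (v\<in>S) + of_bool (w\<in>S)"
  using assms by (cases "u\<in>S"; cases "v\<in>S"; cases "w\<in>S") (auto simp: Int_insert_right)

lemma card2:
  assumes "u \<noteq> v"
  shows "card (S \<inter> {u,v}) = of_bool (u\<in>S) + of_bool (v\<in>S)"
  using assms by (cases "u\<in>S"; cases "v\<in>S") (auto simp: Int_insert_right)

lemma split_card:
  fixes S :: "'b::finite set"
  shows "card S = card (S \<inter> K) + card (S - K)"
proof -
  have "S = (S \<inter> K) \<union> (S - K)" by blast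
  then have "card S = card ((S \<inter> K) \<union> (S - K))" by simp
  also have "\<dots> = card (S \<inter> K) + card (S - K)"
    by (rule card_Un_disjoint) auto
  finally show ?thesis .
qed

lemma fieldpart:
  fixes a b r s i j :: "'a::field"
  assumes "r \<noteq> 0" "s \<noteq> 0" "i \<noteq> j"
  shows "(a \<noteq> b \<and> a = b + s / (i - j) \<and> a + r / (j - i) = b) \<longleftrightarrow> (r = s \<and> (b - a) * (j - i) = r)"
proof -
  have ij: "i - j \<noteq> 0" "j - i \<noteq> 0" using assms by auto
  have e1: "a = b + s / (i - j) \<longleftrightarrow> (b - a) * (j - i) = s"
    using ij by (auto simp: field_simps)
  have e2: "a + r / (j - i) = b \<longleftrightarrow> (b - a) * (j - i) = r"
    using ij by (auto simp: field_simps)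
  show ?thesis using e1 e2 assms(1) by auto
qed

theorem lemma10:
  fixes a b r s i j :: "'a::{field,finite}"
  assumes "r \<noteq> 0" and "s \<noteq> 0"
  shows "int (hdist (tri (fKri a r i)) (tri (fKri b s j))) = int (hdist (fKri a r i) (fKri b s j)) - 3
         \<longleftrightarrow> (r = s \<and> (b - a) * (j - i) = r)"
proof -
  define S where "S = {x. fKri a r i x \<noteq> fKri b s j x}"
  define T where "T = {x. tri (fKri a r i) x \<noteq> tri (fKri b s j) x}"
  define K where "K = {None, Some i, Some j}"
  have t1: "tri (fKri a r i) x = fKri a r i x" if "x \<notin> K" for x
    using that unfolding K_def tri_def fKri_def by (cases x) auto
  have t2: "tri (fKri b s j) x = fKri b s j x" if "x \<notin> K" for x
    using that unfolding K_def tri_def fKri_def by (cases x) auto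
  have ST: "S - K = T - K"
    unfolding S_def T_def using t1 t2 by auto
  have hS: "hdist (fKri a r i) (fKri b s j) = card (S \<inter> K) + card (S - K)"
    unfolding hdist_def S_def[symmetric] by (rule split_card)
  have hT: "hdist (tri (fKri a r i)) (tri (fKri b s j)) = card (T \<inter> K) + card (S - K)"
    unfolding hdist_def T_def[symmetric] ST by (rule split_card)
  show ?thesis
  proof (cases "i = j")
    case True
    have K2: "K = {None, Some i}" using True K_def by simp
    have "card (S \<inter> K) = of_bool (a \<noteq> b)"
      unfolding K2 by (subst card2) (auto simp: S_def fKri_def True)
    moreover have "card (T \<inter> K) = of_bool (a \<noteq> b)"
      unfolding K2 by (subst card2) (auto simp: T_def tri_def fKri_def True)
    ultimately show ?thesis using hS hT True assms by auto
  next
    case False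
    have "card (S \<inter> K) = of_bool (a \<noteq> b) + 2"
      unfolding K_def using False by (subst card3) (auto simp: S_def fKri_def)
    moreover have "card (T \<inter> K) = of_bool (a \<noteq> b + s / (i - j)) + of_bool (a + r / (j - i) \<noteq> b)"
      unfolding K_def using False by (subst card3) (auto simp: T_def tri_def fKri_def)
    ultimately have "int (hdist (tri (fKri a r i)) (tri (fKri b s j))) = int (hdist (fKri a r i) (fKri b s j)) - 3
        \<longleftrightarrow> (a \<noteq> b \<and> a = b + s / (i - j) \<and> a + r / (j - i) = b)"
      using hS hT by auto
    then show ?thesis using fieldpart[OF assms False] by simp
  qed
qed

end
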